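(* Consider an asymptotic regime indexed by the sample size $n\to\infty$, with $p=p_n>n$. Let $X=(X_1,\dots,X_p)\in\mathbb{R}^{n\times p}$ be a random design matrix, and suppose: (A1) (general position) with probability one, for any $k<\min\{n,p\}$, any indices $i_1,\dots,i_{k+1}$ and any signs $\sigma_1,\dots,\sigma_{k+1}\in\{-1,1\}$, the affine span of $\sigma_1X_{i_1},\dots,\sigma_{k+1}X_{i_{k+1}}$ contains no element of $\{\pm X_i: i\neq i_1,\dots,i_{k+1}\}$; (A2) there are positive constants $C_{\min}$ and $K$ (with $n$ divisible by $K$) such that $\lim_{n\to\infty}P\big(\phi_{\min}(n/K)\ge C_{\min}\big)=1$; (A3) there is a positive constant $C_{\max}$ such that $\lim_{n\to\infty}P\big(\phi_{\max}(n)\le C_{\max}\big)=1$. Let the node-wise Lasso tuning parameter satisfy $\lambda_1\ge C_1/\sqrt{n}$ for some constant $C_1>0$. Then $$\lim_{n\to\infty}P\left(\frac{1}{\tilde\tau_1^2}\le \frac{1}{C_{\min}}+\frac{C_{\max}K}{C_1^2}\right)=1.$$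
   Context: For $s\ge1$, the restricted maximum and minimum eigenvalues are $\phi_{\max}(s)=\max_{1\le\|z\|_0\le s}\frac{\|Xz\|^2}{n\|z\|^2}$ and $\phi_{\min}(s)=\min_{1\le\|z\|_0\le s}\frac{\|Xz\|^2}{n\|z\|^2}$. Let $X_{-1}$ be $X$ with the first column removed. The node-wise Lasso is $\hat\gamma_1=\arg\min_{\gamma\in\mathbb{R}^{p-1}}\frac1n\|X_1-X_{-1}\gamma\|^2+2\lambda_1\|\gamma\|_1$, and $\tilde\tau_1^2=\frac1n\|X_1-X_{-1}\hat\gamma_1\|^2$. *)

theory Defs
  imports "HOL-Probability.Probability"
begin

text \<open>An n x p design matrix is a function X :: nat => nat => real, X r j being the entry
  in row r < n and column j < p. Columns are 0-indexed, so the paper's first column X_1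
  is column 0. Vectors z in R^p are functions nat => real vanishing outside {..<p}.\<close>

definition Xmul :: "nat \<Rightarrow> (nat \<Rightarrow> nat \<Rightarrow> real) \<Rightarrow> (nat \<Rightarrow> real) \<Rightarrow> nat \<Rightarrow> real" where
  "Xmul p X z r = (\<Sum>j<p. X r j * z j)"

definition sqnorm :: "nat \<Rightarrow> (nat \<Rightarrow> real) \<Rightarrow> real" where
  "sqnorm m v = (\<Sum>r<m. (v r)^2)"

definition l0norm :: "nat \<Rightarrow> (nat \<Rightarrow> real) \<Rightarrow> nat" where
  "l0norm p z = card {j. j < p \<and> z j \<noteq> 0}"

definition sparse_vecs :: "nat \<Rightarrow> nat \<Rightarrow> (nat \<Rightarrow> real) set" where
  "sparse_vecs p s = {z. (\<forall>j\<ge>p. z j = 0) \<and> 1 \<le> l0norm p z \<and> l0norm p z \<le> s}"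

definition rayleigh :: "nat \<Rightarrow> nat \<Rightarrow> (nat \<Rightarrow> nat \<Rightarrow> real) \<Rightarrow> (nat \<Rightarrow> real) \<Rightarrow> real" where
  "rayleigh n p X z = sqnorm n (Xmul p X z) / (real n * sqnorm p z)"

definition phi_max :: "nat \<Rightarrow> nat \<Rightarrow> (nat \<Rightarrow> nat \<Rightarrow> real) \<Rightarrow> nat \<Rightarrow> real" where
  "phi_max n p X s = (SUP z \<in> sparse_vecs p s. rayleigh n p X z)"

definition phi_min :: "nat \<Rightarrow> nat \<Rightarrow> (nat \<Rightarrow> nat \<Rightarrow> real) \<Rightarrow> nat \<Rightarrow> real" where
  "phi_min n p X s = (INF z \<in> sparse_vecs p s. rayleigh n p X z)"

definition general_position :: "nat \<Rightarrow> nat \<Rightarrow> (nat \<Rightarrow> nat \<Rightarrow> real) \<Rightarrow> bool" where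
  "general_position n p X \<longleftrightarrow>
     (\<forall>k idx sg. k < min n p \<longrightarrow> (\<forall>j\<le>k. idx j < p) \<longrightarrow> (\<forall>j\<le>k. sg j \<in> {-1, 1::real}) \<longrightarrow>
        \<not> (\<exists>i<p. i \<notin> idx ` {..k} \<and> (\<exists>s\<in>{-1, 1::real}. \<exists>c :: nat \<Rightarrow> real.
              (\<Sum>j\<le>k. c j) = 1 \<and> (\<forall>r<n. s * X r i = (\<Sum>j\<le>k. c j * (sg j * X r (idx j)))))))"

text \<open>Node-wise Lasso objective for column 0 regressed on columns 1..p-1
  (gamma is indexed by the column it multiplies, only gamma 1..p-1 matter).\<close>
definition nw_resid :: "nat \<Rightarrow> nat \<Rightarrow> (nat \<Rightarrow> nat \<Rightarrow> real) \<Rightarrow> (nat \<Rightarrow> real) \<Rightarrow> real" where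
  "nw_resid n p X g = sqnorm n (\<lambda>r. X r 0 - (\<Sum>j\<in>{1..<p}. X r j * g j)) / real n"

definition nw_lasso_obj :: "nat \<Rightarrow> nat \<Rightarrow> (nat \<Rightarrow> nat \<Rightarrow> real) \<Rightarrow> real \<Rightarrow> (nat \<Rightarrow> real) \<Rightarrow> real" where
  "nw_lasso_obj n p X lam g = nw_resid n p X g + 2 * lam * (\<Sum>j\<in>{1..<p}. \<bar>g j\<bar>)"

definition nw_lasso_min :: "nat \<Rightarrow> nat \<Rightarrow> (nat \<Rightarrow> nat \<Rightarrow> real) \<Rightarrow> real \<Rightarrow> (nat \<Rightarrow> real) \<Rightarrow> bool" where
  "nw_lasso_min n p X lam g \<longleftrightarrow> (\<forall>h. nw_lasso_obj n p X lam g \<le> nw_lasso_obj n p X lam h)"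

text \<open>Inner probability of a (possibly non-measurable) event; equals the probability for
  measurable events.\<close>
definition inner_prob :: "'a measure \<Rightarrow> 'a set \<Rightarrow> real" where
  "inner_prob M S = (SUP A \<in> {A. A \<in> sets M \<and> A \<subseteq> S}. measure M A)"

end

theory Submission
  imports Defs
begin

lemma small_pos_limit:
  fixes c b d :: real
  assumes d: "d > 0" and H: "\<And>u. 0 < u \<Longrightarrow> u < d \<Longrightarrow> 0 \<le> u * c + u^2 * b"
  shows "c \<ge> 0"
proof (rule ccontr)
  assume "\<not> c \<ge> 0"
  hence c: "c < 0" by simp
  define u where "u = min (d/2) (-c / (2*(\<bar>b\<bar>+1)))"
  have "-c / (2*(\<bar>b\<bar>+1)) > 0" by (rule divide_pos_pos) (use c in auto)
  hence u0: "u > 0" unfolding u_def using d by simp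
  have ud: "u < d" unfolding u_def using d by linarith
  have ule: "u \<le> -c / (2*(\<bar>b\<bar>+1))" unfolding u_def by (rule min.cobounded2)
  have pos: "2*(\<bar>b\<bar>+1) > (0::real)" by (simp add: add_pos_nonneg)
  have "u * (2*(\<bar>b\<bar>+1)) \<le> -c" using iffD1[OF pos_le_divide_eq[OF pos] ule] .
  hence h1: "2*(u*\<bar>b\<bar>) + 2*u \<le> -c" by (simp add: algebra_simps)
  have h2: "u*b \<le> u*\<bar>b\<bar>" using u0 by (intro mult_left_mono) auto
  have "u * b \<le> -c/2" using h1 h2 u0 by linarith
  hence "c + u*b < 0" using c by linarith
  hence "u * (c + u*b) < 0" using u0 by (simp add: mult_pos_neg)
  moreover have "0 \<le> u * (c + u*b)" using H[OF u0 ud] by (simp add: power2_eq_square algebra_simps)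
  ultimately show False by linarith
qed

lemma resid_expand:
  fixes X :: "nat \<Rightarrow> nat \<Rightarrow> real"
  assumes j: "j \<in> {1..<p}"
  shows "nw_resid n p X (\<lambda>i. g i + (if i = j then t else 0)) =
    nw_resid n p X g + (-2*t*(\<Sum>r<n. X r j * (X r 0 - (\<Sum>i\<in>{1..<p}. X r i * g i)))
       + t^2 * (\<Sum>r<n. (X r j)^2)) / real n"
proof -
  define R where "R r = X r 0 - (\<Sum>i\<in>{1..<p}. X r i * g i)" for r
  have "\<And>r. (\<Sum>i\<in>{1..<p}. X r i * (g i + (if i = j then t else 0))) =
     (\<Sum>i\<in>{1..<p}. X r i * g i) + X r j * t"
    using j by (simp add: distrib_left sum.distrib if_distrib[of "\<lambda>x. X _ _ * x"] sum.delta cong: if_cong)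
  hence e: "\<And>r. X r 0 - (\<Sum>i\<in>{1..<p}. X r i * (g i + (if i = j then t else 0))) = R r - t * X r j"
    unfolding R_def by (simp add: algebra_simps)
  have sq: "sqnorm n (\<lambda>r. R r - t * X r j) = sqnorm n R + (-2*t*(\<Sum>r<n. X r j * R r) + t^2 * (\<Sum>r<n. (X r j)^2))"
  proof -
    have "\<And>r. (R r - t * X r j)^2 = (R r)^2 + (-2*t*(X r j * R r) + t^2 * (X r j)^2)"
      by (simp add: power2_eq_square algebra_simps)
    thus ?thesis unfolding sqnorm_def by (simp add: sum.distrib sum_subtractf sum_distrib_left[symmetric] del: sum_distrib_left)
  qed
  have "nw_resid n p X (\<lambda>i. g i + (if i = j then t else 0)) = sqnorm n (\<lambda>r. R r - t * X r j) / real n"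
    unfolding nw_resid_def e ..
  also have "\<dots> = sqnorm n R / real n + (-2*t*(\<Sum>r<n. X r j * R r) + t^2 * (\<Sum>r<n. (X r j)^2)) / real n"
    unfolding sq by (rule add_divide_distrib)
  also have "sqnorm n R / real n = nw_resid n p X g" unfolding nw_resid_def R_def ..
  finally show ?thesis unfolding R_def .
qed

lemma pen_expand:
  fixes g :: "nat \<Rightarrow> real"
  assumes j: "j \<in> {1..<p}"
  shows "(\<Sum>i\<in>{1..<p}. \<bar>g i + (if i = j then t else 0)\<bar>) =
    (\<Sum>i\<in>{1..<p}. \<bar>g i\<bar>) + (\<bar>g j + t\<bar> - \<bar>g j\<bar>)" (is "?L = ?R")
proof -
  have "?L = (\<Sum>i\<in>{1..<p}. \<bar>g i\<bar> + (if i = j then \<bar>g j + t\<bar> - \<bar>g j\<bar> else (0::real)))"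
    by (rule sum.cong) auto
  also have "\<dots> = ?R" using j by (simp add: sum.distrib)
  finally show ?thesis .
qed

lemma kkt:
  fixes X :: "nat \<Rightarrow> nat \<Rightarrow> real"
  assumes mn: "nw_lasso_min n p X lam g" and j: "j \<in> {1..<p}" and gj: "g j \<noteq> 0" and n: "n > 0"
  shows "(\<Sum>r<n. X r j * (X r 0 - (\<Sum>i\<in>{1..<p}. X r i * g i))) = real n * lam * sgn (g j)"
proof -
  define a where "a = (\<Sum>r<n. X r j * (X r 0 - (\<Sum>i\<in>{1..<p}. X r i * g i)))"
  define b where "b = (\<Sum>r<n. (X r j)^2)"
  define sg where "sg = sgn (g j)"
  define c where "c = 2*lam* sg - 2*a/real n"
  have key: "0 \<le> t * c + t^2 * (b / real n)" if t: "\<bar>t\<bar> < \<bar>g j\<bar>" for t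
  proof -
    have ab: "\<bar>g j + t\<bar> - \<bar>g j\<bar> = sg * t" unfolding sg_def using t gj
      by (cases "g j > 0") (auto simp: abs_if sgn_if)
    have "nw_lasso_obj n p X lam g \<le> nw_lasso_obj n p X lam (\<lambda>i. g i + (if i = j then t else 0))"
      using mn unfolding nw_lasso_min_def by blast
    also have "\<dots> = nw_lasso_obj n p X lam g + ((-2*t*a + t^2*b) / real n + 2*lam*(sg * t))"
      unfolding nw_lasso_obj_def resid_expand[OF j] pen_expand[OF j] ab a_def b_def
      by (simp add: algebra_simps)
    finally have "0 \<le> (-2*t*a + t^2*b) / real n + 2*lam*(sg * t)" by simp
    also have "\<dots> = t * c + t^2 * (b / real n)" unfolding c_def using n
      by (simp add: field_simps)
    finally show ?thesis .
  qed
  have d: "\<bar>g j\<bar> > 0" using gj by simp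
  have c1: "c \<ge> 0"
    by (rule small_pos_limit[OF d, of c "b / real n"]) (rule key, simp)
  have c2: "-c \<ge> 0"
  proof (rule small_pos_limit[OF d, of "-c" "b / real n"])
    fix u :: real assume "0 < u" "u < \<bar>g j\<bar>"
    hence "0 \<le> (-u) * c + (-u)^2 * (b / real n)" by (intro key) simp
    thus "0 \<le> u * (-c) + u^2 * (b / real n)" by simp
  qed
  have "c = 0" using c1 c2 by linarith
  hence "a / real n = lam * sg" unfolding c_def by simp
  thus ?thesis using n unfolding a_def[symmetric] sg_def by (simp add: field_simps)
qed

lemma sqnorm_nonneg: "0 \<le> sqnorm m v"
  unfolding sqnorm_def by (rule sum_nonneg) simp

lemma rayleigh_nonneg: "0 \<le> rayleigh n p X z"
  unfolding rayleigh_def using sqnorm_nonneg by simp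

lemma Xmul_bound: "sqnorm n (Xmul p X z) \<le> (\<Sum>r<n. \<Sum>j<p. (X r j)^2) * sqnorm p z"
proof -
  have "sqnorm n (Xmul p X z) = (\<Sum>r<n. (\<Sum>j<p. X r j * z j)^2)"
    unfolding sqnorm_def Xmul_def ..
  also have "\<dots> \<le> (\<Sum>r<n. (\<Sum>j<p. (X r j)^2) * (\<Sum>j<p. (z j)^2))"
    by (rule sum_mono) (rule Cauchy_Schwarz_ineq_sum)
  also have "\<dots> = (\<Sum>r<n. \<Sum>j<p. (X r j)^2) * sqnorm p z"
    unfolding sqnorm_def by (simp add: sum_distrib_right)
  finally show ?thesis .
qed

lemma rayleigh_le: "rayleigh n p X z \<le> (\<Sum>r<n. \<Sum>j<p. (X r j)^2) / real n"
proof (cases "real n * sqnorm p z > 0")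
  case True
  have B: "0 \<le> (\<Sum>r<n. \<Sum>j<p. (X r j)^2)" by (intro sum_nonneg) auto
  have "rayleigh n p X z \<le> ((\<Sum>r<n. \<Sum>j<p. (X r j)^2) * sqnorm p z) / (real n * sqnorm p z)"
    unfolding rayleigh_def using True Xmul_bound by (intro divide_right_mono) auto
  also have "\<dots> = (\<Sum>r<n. \<Sum>j<p. (X r j)^2) / real n" using True by (simp add: zero_less_mult_iff)
  finally show ?thesis .
next
  case False
  have "0 \<le> real n * sqnorm p z" by (simp add: sqnorm_nonneg)
  hence "real n * sqnorm p z = 0" using False by linarith
  hence "rayleigh n p X z = 0" unfolding rayleigh_def by simp
  moreover have "0 \<le> (\<Sum>r<n. \<Sum>j<p. (X r j)^2) / real n" by (intro divide_nonneg_nonneg sum_nonneg) auto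
  ultimately show ?thesis by simp
qed

lemma le_phi_max: "z \<in> sparse_vecs p s \<Longrightarrow> rayleigh n p X z \<le> phi_max n p X s"
  unfolding phi_max_def
  by (rule cSUP_upper) (auto intro!: bdd_aboveI[where M="(\<Sum>r<n. \<Sum>j<p. (X r j)^2) / real n"] rayleigh_le)

lemma phi_min_le: "z \<in> sparse_vecs p s \<Longrightarrow> phi_min n p X s \<le> rayleigh n p X z"
  unfolding phi_min_def
  by (rule cINF_lower) (auto intro!: bdd_belowI[where m=0] rayleigh_nonneg)

lemma swap_sum:
  "(\<Sum>j<p. u j * (\<Sum>r<n. X r j * R r)) = (\<Sum>r<n. R r * Xmul p X u r)"
proof -
  have "(\<Sum>j<p. u j * (\<Sum>r<n. X r j * R r)) = (\<Sum>j<p. \<Sum>r<n. R r * (X r j * u j))"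
    by (simp add: sum_distrib_left mult_ac)
  also have "\<dots> = (\<Sum>r<n. \<Sum>j<p. R r * (X r j * u j))" by (rule sum.swap)
  also have "\<dots> = (\<Sum>r<n. R r * Xmul p X u r)" unfolding Xmul_def by (simp add: sum_distrib_left)
  finally show ?thesis .
qed

lemma det_bound:
  fixes X :: "nat \<Rightarrow> nat \<Rightarrow> real"
  assumes n: "n > 0" and K: "K > 0" "K dvd n" "K \<le> n" and pn: "p > n"
    and Cmin: "C_min > 0" and Cmax: "C_max > 0" and C1: "C1 > 0"
    and lam: "lam \<ge> C1 / sqrt (real n)"
    and pmin: "C_min \<le> phi_min n p X (n div K)" and pmax: "phi_max n p X n \<le> C_max"
    and mn: "nw_lasso_min n p X lam g"
  shows "nw_resid n p X g \<ge> C_min \<or> nw_resid n p X g \<ge> C1^2 / (real K * C_max)"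
proof -
  define m where "m = n div K"
  have "0 < n div K" using K(1,3) by (simp add: div_greater_zero_iff)
  hence m1: "m \<ge> 1" unfolding m_def by linarith
  have mn_le: "m \<le> n" unfolding m_def by simp
  have mreal: "real m = real n / real K" unfolding m_def using K by (simp add: real_of_nat_div)
  define R where "R r = X r 0 - (\<Sum>i\<in>{1..<p}. X r i * g i)" for r
  have resid: "nw_resid n p X g = sqnorm n R / real n" unfolding nw_resid_def R_def ..
  define S where "S = {j \<in> {1..<p}. g j \<noteq> 0}"
  have finS: "finite S" unfolding S_def by simp
  have sqn: "sqrt (real n) > 0" using n by simp
  have "C1 / sqrt (real n) > 0" using C1 sqn by simp
  hence lam0: "lam > 0" using lam by linarith
  show ?thesis
  proof (cases "m \<le> card S")
    case True
    then obtain T where T: "T \<subseteq> S" "card T = m" "finite T" by (rule obtain_subset_with_card_n)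
    define a where "a j = (\<Sum>r<n. X r j * R r)" for j
    have aT: "(a j)^2 = (real n * lam)^2" if "j \<in> T" for j
    proof -
      have j: "j \<in> {1..<p}" "g j \<noteq> 0" using that T(1) unfolding S_def by auto
      have "a j = real n * lam * sgn (g j)" unfolding a_def R_def by (rule kkt[OF mn j n])
      thus ?thesis using j(2) by (simp add: power_mult_distrib sgn_if)
    qed
    have anz: "a j \<noteq> 0" if "j \<in> T" for j
      using aT[OF that] n lam0 by auto
    define u where "u j = (if j \<in> T then a j else 0)" for j
    have Tp: "T \<subseteq> {..<p}" using T(1) unfolding S_def by auto
    have supp: "{j. j < p \<and> u j \<noteq> 0} = T" using Tp anz unfolding u_def by auto
    have l0u: "l0norm p u = m" unfolding l0norm_def supp using T(2) .
    have "\<forall>j\<ge>p. u j = 0" using Tp unfolding u_def by auto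
    hence usp: "u \<in> sparse_vecs p n"
      unfolding sparse_vecs_def using l0u m1 mn_le by simp
    define Q where "Q = real m * (real n * lam)^2"
    have Q0: "Q > 0" unfolding Q_def using m1 n lam0 by simp
    have sq_u: "sqnorm p u = Q"
    proof -
      have "sqnorm p u = (\<Sum>j\<in>T. (u j)^2)" unfolding sqnorm_def
        by (rule sum.mono_neutral_right) (use Tp in \<open>auto simp: u_def\<close>)
      also have "\<dots> = (\<Sum>j\<in>T. (real n * lam)^2)" by (rule sum.cong) (auto simp: u_def aT)
      finally show ?thesis unfolding Q_def using T(2) by simp
    qed
    have ua: "(\<Sum>j<p. u j * a j) = Q"
    proof -
      have "(\<Sum>j<p. u j * a j) = (\<Sum>j\<in>T. u j * a j)"
        by (rule sum.mono_neutral_right) (use Tp in \<open>auto simp: u_def\<close>)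
      also have "\<dots> = (\<Sum>j\<in>T. (real n * lam)^2)" by (rule sum.cong) (use aT in \<open>auto simp: u_def power2_eq_square\<close>)
      finally show ?thesis unfolding Q_def using T(2) by simp
    qed
    have "Q = (\<Sum>r<n. R r * Xmul p X u r)" using ua swap_sum[where u=u and R=R and p=p and n=n and X=X] unfolding a_def by simp
    hence "Q^2 \<le> sqnorm n R * sqnorm n (Xmul p X u)" unfolding sqnorm_def
      by (simp add: Cauchy_Schwarz_ineq_sum)
    moreover have "sqnorm n (Xmul p X u) \<le> C_max * (real n * Q)"
    proof -
      have "rayleigh n p X u \<le> C_max" using le_phi_max[OF usp, where n=n and X=X] pmax by linarith
      hence "sqnorm n (Xmul p X u) / (real n * Q) \<le> C_max" unfolding rayleigh_def sq_u .
      thus ?thesis using Q0 n by (simp add: pos_divide_le_eq)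
    qed
    moreover have "sqnorm n R * sqnorm n (Xmul p X u) \<le> sqnorm n R * (C_max * (real n * Q))"
      using calculation(2) sqnorm_nonneg[of n R] by (rule mult_left_mono)
    ultimately have "Q^2 \<le> sqnorm n R * (C_max * (real n * Q))" by linarith
    hence "Q * Q \<le> Q * (sqnorm n R * C_max * real n)" by (simp add: power2_eq_square mult_ac)
    hence Qle: "Q \<le> sqnorm n R * C_max * real n" using Q0 by simp
    have "sqnorm n R = real n * nw_resid n p X g" using resid n by simp
    hence "real m * (real n * lam)^2 \<le> real n * nw_resid n p X g * C_max * real n"
      using Qle unfolding Q_def by simp
    hence "(real m * lam^2) * (real n)^2 \<le> (C_max * nw_resid n p X g) * (real n)^2"
      by (simp add: power_mult_distrib power2_eq_square mult_ac)
    moreover have "(real n)^2 > 0" using n by simp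
    ultimately have ml: "real m * lam^2 \<le> C_max * nw_resid n p X g"
      by (rule mult_right_le_imp_le)
    have "(C1 / sqrt (real n))^2 \<le> lam^2" using lam C1 sqn
      by (intro power_mono) auto
    hence "C1^2 / real n \<le> lam^2" using n by (simp add: power_divide)
    hence "real m * (C1^2 / real n) \<le> real m * lam^2" by (intro mult_left_mono) auto
    also have "real m * (C1^2 / real n) = C1^2 / real K" unfolding mreal using n by simp
    finally have pr: "C1^2 / real K \<le> C_max * nw_resid n p X g" using ml by linarith
    have "C1^2 / (real K * C_max) = (C1^2 / real K) / C_max" by simp
    also have "\<dots> \<le> nw_resid n p X g"
      by (subst pos_divide_le_eq[OF Cmax]) (use pr in \<open>metis mult.commute\<close>)
    finally have "C1^2 / (real K * C_max) \<le> nw_resid n p X g" .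
    thus ?thesis by simp
  next
    case False
    define z where "z j = (if j = 0 then 1 else if j < p then - g j else 0)" for j
    have p0: "0 < p" using pn by simp
    have split: "{..<p} = insert 0 {1..<p}" using p0 by auto
    have Xz: "Xmul p X z = R"
    proof
      fix r
      have "Xmul p X z r = X r 0 * z 0 + (\<Sum>j\<in>{1..<p}. X r j * z j)"
        unfolding Xmul_def split by (subst sum.insert) auto
      also have "(\<Sum>j\<in>{1..<p}. X r j * z j) = (\<Sum>j\<in>{1..<p}. - (X r j * g j))"
        by (rule sum.cong) (auto simp: z_def)
      finally have "Xmul p X z r = X r 0 * z 0 + (\<Sum>j\<in>{1..<p}. - (X r j * g j))" .
      moreover have "z 0 = 1" by (simp add: z_def)
      ultimately show "Xmul p X z r = R r" unfolding R_def by (simp add: sum_negf)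
    qed
    have supp: "{j. j < p \<and> z j \<noteq> 0} = insert 0 S" unfolding S_def z_def using p0 by auto
    have "0 \<notin> S" unfolding S_def by simp
    hence cz: "l0norm p z = card S + 1" unfolding l0norm_def supp using finS by simp
    have "\<forall>j\<ge>p. z j = 0" using p0 by (auto simp: z_def)
    hence zsp: "z \<in> sparse_vecs p m" unfolding sparse_vecs_def using cz False by simp
    have z1: "sqnorm p z \<ge> 1"
    proof -
      have "(z 0)^2 \<le> (\<Sum>j<p. (z j)^2)" by (rule member_le_sum) (use p0 in auto)
      thus ?thesis unfolding sqnorm_def by (simp add: z_def)
    qed
    have "C_min \<le> rayleigh n p X z" using phi_min_le[OF zsp, where n=n and X=X] pmin unfolding m_def by linarith
    hence "C_min \<le> sqnorm n R / (real n * sqnorm p z)" unfolding rayleigh_def Xz .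
    hence "C_min * (real n * sqnorm p z) \<le> sqnorm n R" using n z1 by (simp add: pos_le_divide_eq)
    moreover have "C_min * real n \<le> C_min * (real n * sqnorm p z)" using Cmin n z1
      by (intro mult_left_mono) auto
    ultimately have "C_min * real n \<le> sqnorm n R" by linarith
    hence "C_min \<le> nw_resid n p X g" unfolding resid using n by (simp add: pos_le_divide_eq)
    thus ?thesis by simp
  qed
qed

lemma ip_bdd: "prob_space M \<Longrightarrow> bdd_above ((\<lambda>A. measure M A) ` {A. A \<in> sets M \<and> A \<subseteq> S})"
  by (rule bdd_aboveI[where M=1]) (auto intro: prob_space.prob_le_1)

lemma ip_ne: "{A. A \<in> sets M \<and> A \<subseteq> S} \<noteq> {}"
  by auto

lemma ip_le1: "prob_space M \<Longrightarrow> inner_prob M S \<le> 1"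
  unfolding inner_prob_def by (rule cSUP_least[OF ip_ne]) (auto intro: prob_space.prob_le_1)

lemma ip_upper: "prob_space M \<Longrightarrow> A \<in> sets M \<Longrightarrow> A \<subseteq> S \<Longrightarrow> measure M A \<le> inner_prob M S"
  unfolding inner_prob_def by (rule cSUP_upper[OF _ ip_bdd]) auto

lemma ip_mono: "prob_space M \<Longrightarrow> S \<subseteq> T \<Longrightarrow> inner_prob M S \<le> inner_prob M T"
  unfolding inner_prob_def[of M S] by (rule cSUP_least[OF ip_ne]) (auto intro: ip_upper)

lemma ip_inter:
  assumes P: "prob_space M"
  shows "inner_prob M A + inner_prob M B - 1 \<le> inner_prob M (A \<inter> B)"
proof -
  interpret prob_space M by (rule P)
  have key: "measure M A' + measure M B' - 1 \<le> inner_prob M (A \<inter> B)"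
    if "A' \<in> sets M" "A' \<subseteq> A" "B' \<in> sets M" "B' \<subseteq> B" for A' B'
  proof -
    have "measure M (A' \<union> B') = measure M A' + measure M B' - measure M (A' \<inter> B')"
      by (rule measure_Un3) (use that in \<open>auto simp: fmeasurable_eq_sets\<close>)
    moreover have "measure M (A' \<union> B') \<le> 1" by (rule prob_le_1)
    moreover have "measure M (A' \<inter> B') \<le> inner_prob M (A \<inter> B)"
      by (rule ip_upper[OF P]) (use that in auto)
    ultimately show ?thesis by linarith
  qed
  have "inner_prob M A \<le> inner_prob M (A \<inter> B) + 1 - measure M B'"
    if "B' \<in> sets M" "B' \<subseteq> B" for B'
    unfolding inner_prob_def[of M A]
    by (rule cSUP_least[OF ip_ne]) (use key that in force)
  hence "inner_prob M B \<le> inner_prob M (A \<inter> B) + 1 - inner_prob M A"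
    unfolding inner_prob_def[of M B]
    by (intro cSUP_least[OF ip_ne]) force
  thus ?thesis by linarith
qed

lemma det_final:
  fixes X :: "nat \<Rightarrow> nat \<Rightarrow> real"
  assumes n: "n > 0" and K: "K > 0" "K dvd n" "K \<le> n" and pn: "p > n"
    and Cmin: "C_min > 0" and Cmax: "C_max > 0" and C1: "C1 > 0"
    and lam: "lam \<ge> C1 / sqrt (real n)"
    and pmin: "C_min \<le> phi_min n p X (n div K)" and pmax: "phi_max n p X n \<le> C_max"
    and mn: "nw_lasso_min n p X lam g"
  shows "nw_resid n p X g > 0 \<and> 1 / nw_resid n p X g \<le> 1 / C_min + C_max * real K / C1^2"
proof -
  have t1: "0 \<le> 1 / C_min" using Cmin by simp
  have t2: "0 \<le> C_max * real K / C1^2" using Cmax by simp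
  have D: "C1^2 / (real K * C_max) > 0" using C1 Cmax K by simp
  from det_bound[OF assms] show ?thesis
  proof
    assume h: "C_min \<le> nw_resid n p X g"
    hence "1 / nw_resid n p X g \<le> 1 / C_min" using Cmin by (intro divide_left_mono) auto
    thus ?thesis using h Cmin t2 by linarith
  next
    assume h: "C1^2 / (real K * C_max) \<le> nw_resid n p X g"
    hence "inverse (nw_resid n p X g) \<le> inverse (C1^2 / (real K * C_max))"
      using D by (rule le_imp_inverse_le)
    hence "1 / nw_resid n p X g \<le> 1 / (C1^2 / (real K * C_max))"
      by (simp only: inverse_eq_divide)
    also have "\<dots> = C_max * real K / C1^2" by (simp add: mult.commute)
    finally show ?thesis using h D t1 by linarith
  qed
qed

theorem lemma1:
  fixes M :: "nat \<Rightarrow> 'a measure"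
    and X :: "nat \<Rightarrow> 'a \<Rightarrow> nat \<Rightarrow> nat \<Rightarrow> real"
    and p :: "nat \<Rightarrow> nat"
    and K :: nat
    and C_min C_max C1 :: real
    and lam :: "nat \<Rightarrow> real"
  defines "F \<equiv> inf sequentially (principal {n. K dvd n})"
  assumes prob: "\<And>n. prob_space (M n)"
    and meas: "\<And>n r j. (\<lambda>\<omega>. X n \<omega> r j) \<in> borel_measurable (M n)"
    and p_gt: "\<And>n. p n > n"
    and K_pos: "K > 0" and Cmin_pos: "C_min > 0" and Cmax_pos: "C_max > 0" and C1_pos: "C1 > 0"
    and A1: "\<And>n. AE \<omega> in M n. general_position n (p n) (X n \<omega>)"
    and A2: "((\<lambda>n. inner_prob (M n)
               {\<omega> \<in> space (M n). phi_min n (p n) (X n \<omega>) (n div K) \<ge> C_min}) \<longlongrightarrow> 1) F"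
    and A3: "((\<lambda>n. inner_prob (M n)
               {\<omega> \<in> space (M n). phi_max n (p n) (X n \<omega>) n \<le> C_max}) \<longlongrightarrow> 1) F"
    and lam_ge: "\<And>n. lam n \<ge> C1 / sqrt (real n)"
  shows "((\<lambda>n. inner_prob (M n)
            {\<omega> \<in> space (M n). \<forall>g. nw_lasso_min n (p n) (X n \<omega>) (lam n) g \<longrightarrow>
                nw_resid n (p n) (X n \<omega>) g > 0 \<and>
                1 / nw_resid n (p n) (X n \<omega>) g \<le> 1 / C_min + C_max * real K / C1^2}) \<longlongrightarrow> 1) F"
proof -
  define A where "A n = {\<omega> \<in> space (M n). phi_min n (p n) (X n \<omega>) (n div K) \<ge> C_min}" for n
  define B where "B n = {\<omega> \<in> space (M n). phi_max n (p n) (X n \<omega>) n \<le> C_max}" for n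
  define G where "G n = {\<omega> \<in> space (M n). \<forall>g. nw_lasso_min n (p n) (X n \<omega>) (lam n) g \<longrightarrow>
                nw_resid n (p n) (X n \<omega>) g > 0 \<and>
                1 / nw_resid n (p n) (X n \<omega>) g \<le> 1 / C_min + C_max * real K / C1^2}" for n
  have ev: "eventually (\<lambda>n. K dvd n \<and> K \<le> n) F"
    unfolding F_def eventually_inf_principal
    by (rule eventually_mono[OF eventually_ge_at_top[of K]]) auto
  have sub: "A n \<inter> B n \<subseteq> G n" if "K dvd n" "K \<le> n" for n
  proof
    fix \<omega> assume w: "\<omega> \<in> A n \<inter> B n"
    have n0: "n > 0" using that K_pos by linarith
    show "\<omega> \<in> G n" unfolding G_def
    proof (intro CollectI conjI allI impI)
      show "\<omega> \<in> space (M n)" using w unfolding A_def by auto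
    next
      fix g assume mn: "nw_lasso_min n (p n) (X n \<omega>) (lam n) g"
      have "nw_resid n (p n) (X n \<omega>) g > 0 \<and>
                1 / nw_resid n (p n) (X n \<omega>) g \<le> 1 / C_min + C_max * real K / C1^2"
        by (rule det_final[OF n0 K_pos that p_gt Cmin_pos Cmax_pos C1_pos lam_ge _ _ mn])
          (use w in \<open>auto simp: A_def B_def\<close>)
      thus "nw_resid n (p n) (X n \<omega>) g > 0"
        "1 / nw_resid n (p n) (X n \<omega>) g \<le> 1 / C_min + C_max * real K / C1^2" by auto
    qed
  qed
  have lo: "eventually (\<lambda>n. inner_prob (M n) (A n) + inner_prob (M n) (B n) - 1 \<le> inner_prob (M n) (G n)) F"
  proof (rule eventually_mono[OF ev])
    fix n assume "K dvd n \<and> K \<le> n"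
    hence s: "A n \<inter> B n \<subseteq> G n" using sub by blast
    show "inner_prob (M n) (A n) + inner_prob (M n) (B n) - 1 \<le> inner_prob (M n) (G n)"
      using ip_inter[OF prob, of n "A n" "B n"] ip_mono[OF prob[of n] s] by linarith
  qed
  have hi: "eventually (\<lambda>n. inner_prob (M n) (G n) \<le> 1) F"
    by (rule always_eventually) (simp add: ip_le1[OF prob])
  have "((\<lambda>n. inner_prob (M n) (A n) + inner_prob (M n) (B n) - 1) \<longlongrightarrow> 1 + 1 - 1) F"
    by (intro tendsto_intros) (use A2 A3 in \<open>simp_all add: A_def B_def\<close>)
  hence lim: "((\<lambda>n. inner_prob (M n) (A n) + inner_prob (M n) (B n) - 1) \<longlongrightarrow> 1) F" by simp
  have "((\<lambda>n. inner_prob (M n) (G n)) \<longlongrightarrow> 1) F"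
    by (rule tendsto_sandwich[OF lo hi lim tendsto_const])
  thus ?thesis unfolding G_def .
qed

end
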